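(* Let $T=(V',E_T)$ be a finite tree rooted at a vertex $r$ that is a centroid of $T$. Then $S_c(T)=S_d(T)$.
   Context: For $x,y\in V'$, $d_T(x,y)$ is the number of edges on the path between $x$ and $y$ in $T$. The vertex deviation of $v\in V'$ is $m(v)=\frac{1}{|V'|}\sum_{u\in V'}d_T(v,u)$, and a centroid of $T$ is a vertex minimizing $m(v)$. $S_d(T)=\sum_{x\in V'} d_T(r,x)$ for the root $r$. For an edge $e\in E_T$, removing $e$ splits $T$ into two trees $T_1,T_2$; the cut number of $e$ is $c(e)=\min(|T_1|,|T_2|)$ (sizes counted in vertices), and $S_c(T)=\sum_{e\in E_T}c(e)$. *)

theory Defs
  imports Complex_Main
begin

definition vwalk :: "'a set \<Rightarrow> 'a set set \<Rightarrow> 'a list \<Rightarrow> bool" where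
  "vwalk V E xs \<longleftrightarrow> xs \<noteq> [] \<and> set xs \<subseteq> V \<and>
     (\<forall>i. Suc i < length xs \<longrightarrow> {xs ! i, xs ! Suc i} \<in> E)"

definition is_cycle :: "'a set \<Rightarrow> 'a set set \<Rightarrow> 'a list \<Rightarrow> bool" where
  "is_cycle V E xs \<longleftrightarrow> vwalk V E xs \<and> length xs \<ge> 4 \<and> hd xs = last xs \<and> distinct (tl xs)"

definition reach :: "'a set \<Rightarrow> 'a set set \<Rightarrow> 'a \<Rightarrow> 'a set" where
  "reach V E u = {w. \<exists>xs. vwalk V E xs \<and> hd xs = u \<and> last xs = w}"

definition is_tree :: "'a set \<Rightarrow> 'a set set \<Rightarrow> bool" where
  "is_tree V E \<longleftrightarrow> finite V \<and> V \<noteq> {} \<and>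
     (\<forall>e\<in>E. \<exists>u v. e = {u, v} \<and> u \<noteq> v \<and> u \<in> V \<and> v \<in> V) \<and>
     (\<forall>u\<in>V. reach V E u = V) \<and>
     (\<nexists>xs. is_cycle V E xs)"

definition tdist :: "'a set \<Rightarrow> 'a set set \<Rightarrow> 'a \<Rightarrow> 'a \<Rightarrow> nat" where
  "tdist V E x y = (LEAST n. \<exists>xs. vwalk V E xs \<and> hd xs = x \<and> last xs = y \<and> length xs = Suc n)"

definition vertex_deviation :: "'a set \<Rightarrow> 'a set set \<Rightarrow> 'a \<Rightarrow> real" where
  "vertex_deviation V E v = (1 / real (card V)) * (\<Sum>u\<in>V. real (tdist V E v u))"

definition is_centroid :: "'a set \<Rightarrow> 'a set set \<Rightarrow> 'a \<Rightarrow> bool" where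
  "is_centroid V E v \<longleftrightarrow> v \<in> V \<and> (\<forall>u\<in>V. vertex_deviation V E v \<le> vertex_deviation V E u)"

definition S_d :: "'a set \<Rightarrow> 'a set set \<Rightarrow> 'a \<Rightarrow> nat" where
  "S_d V E r = (\<Sum>x\<in>V. tdist V E r x)"

text \<open>Cut number: removing e = {u,v} splits the tree into the components of u and v.\<close>
definition cut_number :: "'a set \<Rightarrow> 'a set set \<Rightarrow> 'a set \<Rightarrow> nat" where
  "cut_number V E e = Min ((\<lambda>u. card (reach V (E - {e}) u)) ` e)"

definition S_c :: "'a set \<Rightarrow> 'a set set \<Rightarrow> nat" where
  "S_c V E = (\<Sum>e\<in>E. cut_number V E e)"

end

theory Submission
  imports Defs "HOL-Library.Transitive_Closure_Table"
begin

definition adj :: "'a set set \<Rightarrow> 'a \<Rightarrow> 'a \<Rightarrow> bool" where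
  "adj E u v \<longleftrightarrow> {u, v} \<in> E"

lemma adj_sym: "adj E u v \<Longrightarrow> adj E v u"
  by (simp add: adj_def insert_commute)

lemma con_sym: "(adj E)\<^sup>*\<^sup>* u v \<Longrightarrow> (adj E)\<^sup>*\<^sup>* v u"
  by (induction rule: rtranclp_induct)
     (auto intro: converse_rtranclp_into_rtranclp adj_sym)

lemma vwalk_single: "vwalk V E [x] \<longleftrightarrow> x \<in> V"
  by (simp add: vwalk_def)

lemma vwalk_Cons2: "vwalk V E (x # y # ys) \<longleftrightarrow> x \<in> V \<and> {x, y} \<in> E \<and> vwalk V E (y # ys)"
proof
  assume h: "vwalk V E (x # y # ys)"
  then have a: "\<forall>i. Suc i < length (x#y#ys) \<longrightarrow> {(x#y#ys) ! i, (x#y#ys) ! Suc i} \<in> E"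
    by (simp add: vwalk_def)
  have "{x, y} \<in> E" using a[rule_format, of 0] by simp
  moreover have "\<forall>i. Suc i < length (y#ys) \<longrightarrow> {(y#ys) ! i, (y#ys) ! Suc i} \<in> E"
  proof (intro allI impI)
    fix i assume "Suc i < length (y#ys)"
    then show "{(y#ys) ! i, (y#ys) ! Suc i} \<in> E" using a[rule_format, of "Suc i"] by simp
  qed
  ultimately show "x \<in> V \<and> {x, y} \<in> E \<and> vwalk V E (y # ys)"
    using h by (simp add: vwalk_def)
next
  assume h: "x \<in> V \<and> {x, y} \<in> E \<and> vwalk V E (y # ys)"
  then have a: "\<forall>i. Suc i < length (y#ys) \<longrightarrow> {(y#ys) ! i, (y#ys) ! Suc i} \<in> E"
    by (simp add: vwalk_def)
  have "\<forall>i. Suc i < length (x#y#ys) \<longrightarrow> {(x#y#ys) ! i, (x#y#ys) ! Suc i} \<in> E"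
  proof (intro allI impI)
    fix i assume i: "Suc i < length (x#y#ys)"
    show "{(x#y#ys) ! i, (x#y#ys) ! Suc i} \<in> E"
    proof (cases i)
      case 0 then show ?thesis using h by simp
    next
      case (Suc j) then show ?thesis using a[rule_format, of j] i by simp
    qed
  qed
  then show "vwalk V E (x # y # ys)" using h by (simp add: vwalk_def)
qed

lemma vwalk_path:
  "vwalk V E (x # ys) \<longleftrightarrow> x \<in> V \<and> set ys \<subseteq> V \<and> rtrancl_path (adj E) x ys (last (x # ys))"
proof (induction ys arbitrary: x)
  case Nil
  then show ?case by (auto simp: vwalk_single intro: rtrancl_path.base)
next
  case (Cons y ys)
  have "rtrancl_path (adj E) x (y # ys) z \<longleftrightarrow> adj E x y \<and> rtrancl_path (adj E) y ys z" for z
    by (auto elim: rtrancl_path.cases intro: rtrancl_path.step)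
  moreover have "{x, y} \<in> E \<longleftrightarrow> adj E x y" by (simp add: adj_def)
  ultimately show ?case using Cons[of y] by (simp add: vwalk_Cons2) blast
qed

lemma path_last: "rtrancl_path R x ys z \<Longrightarrow> last (x # ys) = z"
  by (induction rule: rtrancl_path.induct) auto


lemma card_filter_sum: "finite A \<Longrightarrow> card {x \<in> A. P x} = (\<Sum>x\<in>A. if P x then 1 else 0)"
  by (simp add: sum.If_cases Int_def)

fun pedges :: "'a \<Rightarrow> 'a list \<Rightarrow> 'a set set" where
  "pedges x [] = {}"
| "pedges x (y # ys) = insert {x, y} (pedges y ys)"

lemma pedges_sub: "e \<in> pedges x ys \<Longrightarrow> e \<subseteq> set (x # ys)"
  by (induction x ys rule: pedges.induct) auto

lemma finite_pedges: "finite (pedges x ys)"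
  by (induction x ys rule: pedges.induct) auto

lemma card_pedges_le: "card (pedges x ys) \<le> length ys"
  by (induction x ys rule: pedges.induct) (auto simp: card_insert_if finite_pedges)

lemma card_pedges_eq: "distinct (x # ys) \<Longrightarrow> card (pedges x ys) = length ys"
proof (induction x ys rule: pedges.induct)
  case (1 x) then show ?case by simp
next
  case (2 x y ys)
  have "{x, y} \<notin> pedges y ys" using pedges_sub[of "{x,y}" y ys] 2(2) by auto
  then show ?case using 2 by (simp add: finite_pedges)
qed

lemma path_pedges_in: "rtrancl_path (adj E') x ys z \<Longrightarrow> e \<in> pedges x ys \<Longrightarrow> e \<in> E'"
  by (induction rule: rtrancl_path.induct) (auto simp: adj_def)

lemma path_avoid: "rtrancl_path (adj E') x ys z \<Longrightarrow> e \<notin> pedges x ys \<Longrightarrow> rtrancl_path (adj (E' - {e})) x ys z"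
  by (induction rule: rtrancl_path.induct) (auto simp: adj_def intro: rtrancl_path.intros)

lemma path_suffix: "rtrancl_path R x ys z \<Longrightarrow> v \<in> set (x # ys) \<Longrightarrow> R\<^sup>*\<^sup>* v z"
proof (induction rule: rtrancl_path.induct)
  case (base x) then show ?case by simp
next
  case (step x y ys z)
  then show ?case
    by (metis converse_rtranclp_into_rtranclp rtranclp_eq_rtrancl_path rtrancl_path.step set_ConsD)
qed

context
  fixes V :: "'a set" and E :: "'a set set"
  assumes tree: "is_tree V E"
begin

lemma finV: "finite V" using tree by (simp add: is_tree_def)

lemma edgeE: "e \<in> E \<Longrightarrow> \<exists>u v. e = {u, v} \<and> u \<noteq> v \<and> u \<in> V \<and> v \<in> V"
  using tree by (simp add: is_tree_def)

lemma EPow: "E \<subseteq> Pow V" using edgeE by blast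

lemma finE: "finite E" using EPow finV by (meson finite_Pow_iff finite_subset)

lemma adj_V: "E' \<subseteq> E \<Longrightarrow> adj E' u v \<Longrightarrow> u \<in> V \<and> v \<in> V \<and> u \<noteq> v"
proof -
  assume "E' \<subseteq> E" "adj E' u v"
  then have "{u, v} \<in> E" by (auto simp: adj_def)
  then obtain a b where "{u, v} = {a, b}" "a \<noteq> b" "a \<in> V" "b \<in> V" using edgeE by blast
  then show ?thesis by (metis doubleton_eq_iff insert_absorb2 insert_iff singleton_insert_inj_eq)
qed

lemma path_V: assumes "E' \<subseteq> E" shows "rtrancl_path (adj E') x ys z \<Longrightarrow> set ys \<subseteq> V"
proof (induction rule: rtrancl_path.induct)
  case (base x) then show ?case by simp
next
  case (step x y ys z) then show ?case using adj_V[OF assms] by auto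
qed

lemma reach_eq: "E' \<subseteq> E \<Longrightarrow> reach V E' u = {w. u \<in> V \<and> (adj E')\<^sup>*\<^sup>* u w}"
proof (intro set_eqI iffI)
  fix w assume sub: "E' \<subseteq> E" and "w \<in> reach V E' u"
  then obtain xs where xs: "vwalk V E' xs" "hd xs = u" "last xs = w" by (auto simp: reach_def)
  then obtain ys where "xs = u # ys" by (cases xs) (auto simp: vwalk_def)
  then show "w \<in> {w. u \<in> V \<and> (adj E')\<^sup>*\<^sup>* u w}" using xs vwalk_path[of V E' u ys]
    by (auto simp: rtranclp_eq_rtrancl_path)
next
  fix w assume sub: "E' \<subseteq> E" and "w \<in> {w. u \<in> V \<and> (adj E')\<^sup>*\<^sup>* u w}"
  then obtain ys where ys: "u \<in> V" "rtrancl_path (adj E') u ys w" by (auto simp: rtranclp_eq_rtrancl_path)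
  have "set ys \<subseteq> V" by (rule path_V[OF sub ys(2)])
  moreover have l: "last (u # ys) = w" by (rule path_last[OF ys(2)])
  ultimately have "vwalk V E' (u # ys)" using vwalk_path[of V E' u ys] ys by simp
  then show "w \<in> reach V E' u" unfolding reach_def using l
    by (intro CollectI exI[of _ "u # ys"]) simp
qed

lemma tdist_eq: "x \<in> V \<Longrightarrow> tdist V E x y = (LEAST n. \<exists>ys. rtrancl_path (adj E) x ys y \<and> length ys = n)"
  unfolding tdist_def
proof -
  assume x: "x \<in> V"
  have "(\<exists>xs. vwalk V E xs \<and> hd xs = x \<and> last xs = y \<and> length xs = Suc n) \<longleftrightarrow>
        (\<exists>ys. rtrancl_path (adj E) x ys y \<and> length ys = n)" for n
  proof
    assume "\<exists>xs. vwalk V E xs \<and> hd xs = x \<and> last xs = y \<and> length xs = Suc n"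
    then obtain xs where xs: "vwalk V E xs" "hd xs = x" "last xs = y" "length xs = Suc n" by blast
    then obtain ys where "xs = x # ys" by (cases xs) auto
    then show "\<exists>ys. rtrancl_path (adj E) x ys y \<and> length ys = n" using xs vwalk_path[of V E x ys] by auto
  next
    assume "\<exists>ys. rtrancl_path (adj E) x ys y \<and> length ys = n"
    then obtain ys where ys: "rtrancl_path (adj E) x ys y" "length ys = n" by blast
    have "set ys \<subseteq> V" by (rule path_V[OF _ ys(1)]) simp
    moreover have l: "last (x # ys) = y" by (rule path_last[OF ys(1)])
    ultimately have "vwalk V E (x # ys)" using vwalk_path[of V E x ys] ys x by simp
    then show "\<exists>xs. vwalk V E xs \<and> hd xs = x \<and> last xs = y \<and> length xs = Suc n"
      using ys path_last[OF ys(1)] by (intro exI[of _ "x # ys"]) auto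
  qed
  then show "(LEAST n. \<exists>xs. vwalk V E xs \<and> hd xs = x \<and> last xs = y \<and> length xs = Suc n) =
    (LEAST n. \<exists>ys. rtrancl_path (adj E) x ys y \<and> length ys = n)" by simp
qed

lemma conn: "u \<in> V \<Longrightarrow> w \<in> V \<Longrightarrow> (adj E)\<^sup>*\<^sup>* u w"
  using tree reach_eq[of E u] by (auto simp: is_tree_def)

lemma edge_neq: "{a, b} \<in> E \<Longrightarrow> a \<noteq> b"
  using adj_V[of E a b] by (simp add: adj_def)

lemma bridge:
  assumes ab: "{a, b} \<in> E"
  shows "\<not> (adj (E - {{a, b}}))\<^sup>*\<^sup>* a b"
proof
  assume "(adj (E - {{a, b}}))\<^sup>*\<^sup>* a b"
  then obtain ps where "rtrancl_path (adj (E - {{a, b}})) a ps b" by (auto simp: rtranclp_eq_rtrancl_path)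
  then obtain qs where q: "rtrancl_path (adj (E - {{a, b}})) a qs b" and d: "distinct (a # qs)"
    using rtrancl_path_distinct by metis
  have neq: "a \<noteq> b" using edge_neq[OF ab] .
  have "qs \<noteq> []" using q neq by (auto elim: rtrancl_path.cases)
  moreover have "qs \<noteq> [b]"
  proof
    assume "qs = [b]"
    then have "adj (E - {{a, b}}) a b" using q by (auto elim: rtrancl_path.cases)
    then show False by (simp add: adj_def)
  qed
  moreover have lb: "last qs = b" using rtrancl_path_last[OF q] \<open>qs \<noteq> []\<close> .
  ultimately obtain c cs where ccs: "qs = c # cs" "cs \<noteq> []"
    by (metis last_ConsL neq_Nil_conv)
  then have len: "length qs \<ge> 2" by (cases cs) auto
  have p1: "rtrancl_path (adj E) a qs b" using q by (rule rtrancl_path_mono) (auto simp: adj_def)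
  have "adj E b a" using ab by (simp add: adj_def insert_commute)
  then have p2: "rtrancl_path (adj E) b [a] a" by (intro rtrancl_path.step rtrancl_path.base)
  have p: "rtrancl_path (adj E) a (qs @ [a]) a" by (rule rtrancl_path_trans[OF p1 p2])
  have aV: "a \<in> V" using adj_V[of E a b] ab by (simp add: adj_def)
  have "set (qs @ [a]) \<subseteq> V" by (rule path_V[OF _ p]) simp
  then have w: "vwalk V E (a # qs @ [a])" using vwalk_path[of V E a "qs @ [a]"] p aV by simp
  have "distinct (qs @ [a])" using d by simp
  then have "is_cycle V E (a # qs @ [a])" unfolding is_cycle_def using w len by simp
  then show False using tree by (auto simp: is_tree_def)
qed

lemma sep_on_path:
  "rtrancl_path (adj E) x ys z \<Longrightarrow> distinct (x # ys) \<Longrightarrow> e \<in> pedges x ys \<Longrightarrow> \<not> (adj (E - {e}))\<^sup>*\<^sup>* x z"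
proof (induction rule: rtrancl_path.induct)
  case (base x) then show ?case by simp
next
  case (step x y ys z)
  show ?case
  proof (cases "e = {x, y}")
    case True
    have "e \<notin> pedges y ys" using pedges_sub[of e y ys] True step.prems(1) by auto
    then have "rtrancl_path (adj (E - {e})) y ys z" using path_avoid[OF step.hyps(2)] by simp
    then have yz: "(adj (E - {e}))\<^sup>*\<^sup>* y z" by (auto simp: rtranclp_eq_rtrancl_path)
    show ?thesis
    proof
      assume "(adj (E - {e}))\<^sup>*\<^sup>* x z"
      then have "(adj (E - {e}))\<^sup>*\<^sup>* x y" using con_sym[OF yz] by (rule rtranclp_trans)
      then show False using bridge[of x y] step.hyps(1) True by (simp add: adj_def)
    qed
  next
    case False
    then have "e \<in> pedges y ys" using step.prems by simp
    then have nyz: "\<not> (adj (E - {e}))\<^sup>*\<^sup>* y z" using step.IH step.prems by simp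
    have "adj (E - {e}) y x" using step.hyps(1) False by (auto simp: adj_def insert_commute)
    then show ?thesis using nyz by (meson converse_rtranclp_into_rtranclp)
  qed
qed

lemma cover:
  assumes "(adj E)\<^sup>*\<^sup>* a x"
  shows "(adj (E - {{a, b}}))\<^sup>*\<^sup>* a x \<or> (adj (E - {{a, b}}))\<^sup>*\<^sup>* b x"
  using assms
proof (induction rule: rtranclp_induct)
  case base then show ?case by simp
next
  case (step y z)
  show ?case
  proof (cases "{y, z} = {a, b}")
    case True
    then have "z = a \<or> z = b" by (auto simp: doubleton_eq_iff)
    then show ?thesis by auto
  next
    case False
    then have "adj (E - {{a, b}}) y z" using step.hyps(2) by (auto simp: adj_def)
    then show ?thesis using step.IH by (meson rtranclp.rtrancl_into_rtrancl)
  qed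
qed

lemma dist_sep:
  assumes v: "v \<in> V" and x: "x \<in> V"
  shows "tdist V E v x = card {e \<in> E. \<not> (adj (E - {e}))\<^sup>*\<^sup>* v x}"
proof -
  let ?S = "{e \<in> E. \<not> (adj (E - {e}))\<^sup>*\<^sup>* v x}"
  let ?P = "\<lambda>n. \<exists>ys. rtrancl_path (adj E) v ys x \<and> length ys = n"
  have td: "tdist V E v x = (LEAST n. ?P n)" by (rule tdist_eq[OF v])
  obtain ps where ps: "rtrancl_path (adj E) v ps x" using conn[OF v x] by (auto simp: rtranclp_eq_rtrancl_path)
  then obtain qs where qs: "rtrancl_path (adj E) v qs x" and d: "distinct (v # qs)"
    using rtrancl_path_distinct by metis
  have finS: "finite ?S" using finE by simp
  have P1: "?P (LEAST n. ?P n)" using qs by (intro LeastI[of ?P "length qs"]) auto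
  then obtain ys where ys: "rtrancl_path (adj E) v ys x" "length ys = (LEAST n. ?P n)" by blast
  have "?S \<subseteq> pedges v ys"
  proof
    fix e assume e: "e \<in> ?S"
    show "e \<in> pedges v ys"
    proof (rule ccontr)
      assume "e \<notin> pedges v ys"
      then have "rtrancl_path (adj (E - {e})) v ys x" using path_avoid[OF ys(1)] by simp
      then show False using e by (auto simp: rtranclp_eq_rtrancl_path)
    qed
  qed
  then have "card ?S \<le> card (pedges v ys)" by (rule card_mono[OF finite_pedges])
  then have le1: "card ?S \<le> tdist V E v x"
    using card_pedges_le[of v ys] ys(2) td by linarith
  have "pedges v qs \<subseteq> ?S"
  proof
    fix e assume "e \<in> pedges v qs"
    then show "e \<in> ?S" using path_pedges_in[OF qs] sep_on_path[OF qs d] by simp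
  qed
  then have "card (pedges v qs) \<le> card ?S" by (rule card_mono[OF finS])
  then have "length qs \<le> card ?S" using card_pedges_eq[OF d] by simp
  moreover have "tdist V E v x \<le> length qs" using td qs by (auto intro: Least_le)
  ultimately show ?thesis using le1 by simp
qed

lemma con_V:
  assumes sub: "E' \<subseteq> E" and u: "u \<in> V"
  shows "(adj E')\<^sup>*\<^sup>* u x \<Longrightarrow> x \<in> V"
proof (induction rule: rtranclp_induct)
  case base then show ?case using u .
next
  case (step y z) then show ?case using adj_V[OF sub, of y z] by simp
qed

lemma side_split:
  assumes pq: "{p, q} \<in> E"
  shows "{x \<in> V. \<not> (adj (E - {{p, q}}))\<^sup>*\<^sup>* p x} = {x. (adj (E - {{p, q}}))\<^sup>*\<^sup>* q x}"
proof (intro set_eqI iffI)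
  have pV: "p \<in> V" and qV: "q \<in> V" using adj_V[of E p q] pq by (auto simp: adj_def)
  fix x
  {
    assume "x \<in> {x \<in> V. \<not> (adj (E - {{p, q}}))\<^sup>*\<^sup>* p x}"
    then show "x \<in> {x. (adj (E - {{p, q}}))\<^sup>*\<^sup>* q x}" using cover[OF conn[OF pV], of x q] by auto
  }
  {
    assume a: "x \<in> {x. (adj (E - {{p, q}}))\<^sup>*\<^sup>* q x}"
    then have "x \<in> V" using con_V[of "E - {{p,q}}" q x] qV by auto
    moreover have "\<not> (adj (E - {{p, q}}))\<^sup>*\<^sup>* p x"
    proof
      assume "(adj (E - {{p, q}}))\<^sup>*\<^sup>* p x"
      moreover have "(adj (E - {{p, q}}))\<^sup>*\<^sup>* x q" using con_sym a by simp
      ultimately have "(adj (E - {{p, q}}))\<^sup>*\<^sup>* p q" by (rule rtranclp_trans)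
      then show False using bridge[OF pq] by simp
    qed
    ultimately show "x \<in> {x \<in> V. \<not> (adj (E - {{p, q}}))\<^sup>*\<^sup>* p x}" by simp
  }
qed

definition far :: "'a set \<Rightarrow> 'a \<Rightarrow> 'a set" where
  "far e v = {x \<in> V. \<not> (adj (E - {e}))\<^sup>*\<^sup>* v x}"

lemma far_con:
  assumes "(adj (E - {e}))\<^sup>*\<^sup>* u v"
  shows "far e u = far e v"
proof -
  have "(adj (E - {e}))\<^sup>*\<^sup>* u x \<longleftrightarrow> (adj (E - {e}))\<^sup>*\<^sup>* v x" for x
    using assms con_sym[OF assms] rtranclp_trans[of "adj (E - {e})" u v x] rtranclp_trans[of "adj (E - {e})" v u x]
    by blast
  then show ?thesis unfolding far_def by simp
qed

lemma D_formula:
  assumes v: "v \<in> V"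
  shows "(\<Sum>x\<in>V. tdist V E v x) = (\<Sum>e\<in>E. card (far e v))"
proof -
  have "(\<Sum>x\<in>V. tdist V E v x) = (\<Sum>x\<in>V. card {e \<in> E. \<not> (adj (E - {e}))\<^sup>*\<^sup>* v x})"
    using dist_sep[OF v] by simp
  also have "\<dots> = (\<Sum>x\<in>V. \<Sum>e\<in>E. if \<not> (adj (E - {e}))\<^sup>*\<^sup>* v x then 1 else 0)"
    using card_filter_sum[OF finE] by simp
  also have "\<dots> = (\<Sum>e\<in>E. \<Sum>x\<in>V. if \<not> (adj (E - {e}))\<^sup>*\<^sup>* v x then 1 else 0)"
    by (rule sum.swap)
  also have "\<dots> = (\<Sum>e\<in>E. card (far e v))"
    unfolding far_def using card_filter_sum[OF finV] by simp
  finally show ?thesis .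
qed

lemma far_pair:
  assumes f: "{r, w} \<in> E"
  shows "card (far {r, w} r) + card (far {r, w} w) = card V"
proof -
  let ?f = "{r, w}"
  have rV: "r \<in> V" and wV: "w \<in> V" using adj_V[of E r w] f by (auto simp: adj_def)
  have A: "far ?f r = {x. (adj (E - {?f}))\<^sup>*\<^sup>* w x}" unfolding far_def by (rule side_split[OF f])
  have f': "{w, r} \<in> E" using f by (simp add: insert_commute)
  have B: "far ?f w = {x. (adj (E - {?f}))\<^sup>*\<^sup>* r x}" unfolding far_def
    using side_split[OF f'] by (simp add: insert_commute)
  have "far ?f w = V - far ?f r" using B unfolding far_def
    using con_V[of "E - {?f}" r] rV by auto
  moreover have "far ?f r \<subseteq> V" unfolding far_def by auto
  ultimately show ?thesis using finV by (simp add: card_Diff_subset finite_subset card_mono)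
qed

lemma D_step:
  assumes f: "{r, w} \<in> E"
  shows "(\<Sum>x\<in>V. tdist V E w x) + card (far {r, w} r) = (\<Sum>x\<in>V. tdist V E r x) + card (far {r, w} w)"
proof -
  let ?f = "{r, w}"
  have rV: "r \<in> V" and wV: "w \<in> V" using adj_V[of E r w] f by (auto simp: adj_def)
  have eq: "card (far e w) = card (far e r)" if "e \<in> E - {?f}" for e
  proof -
    have "adj (E - {e}) r w" using that f by (auto simp: adj_def)
    then show ?thesis using far_con[of e r w] by (simp add: r_into_rtranclp)
  qed
  have "(\<Sum>x\<in>V. tdist V E w x) = card (far ?f w) + (\<Sum>e\<in>E - {?f}. card (far e w))"
    using D_formula[OF wV] finE f by (simp add: sum.remove)
  moreover have "(\<Sum>x\<in>V. tdist V E r x) = card (far ?f r) + (\<Sum>e\<in>E - {?f}. card (far e r))"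
    using D_formula[OF rV] finE f by (simp add: sum.remove)
  moreover have "(\<Sum>e\<in>E - {?f}. card (far e w)) = (\<Sum>e\<in>E - {?f}. card (far e r))"
    using eq by (rule sum.cong[OF refl])
  ultimately show ?thesis by simp
qed

lemma far_incident_le:
  assumes cen: "is_centroid V E r" and f: "{r, w} \<in> E"
  shows "2 * card (far {r, w} r) \<le> card V"
proof -
  have rV: "r \<in> V" and wV: "w \<in> V" using adj_V[of E r w] f by (auto simp: adj_def)
  have n0: "card V > 0" using finV rV by (auto simp: card_gt_0_iff)
  have "vertex_deviation V E r \<le> vertex_deviation V E w" using cen wV by (simp add: is_centroid_def)
  then have "(\<Sum>u\<in>V. real (tdist V E r u)) \<le> (\<Sum>u\<in>V. real (tdist V E w u))"
    unfolding vertex_deviation_def using n0 by (simp add: divide_le_cancel)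
  then have "real (\<Sum>u\<in>V. tdist V E r u) \<le> real (\<Sum>u\<in>V. tdist V E w u)" by simp
  then have le: "(\<Sum>u\<in>V. tdist V E r u) \<le> (\<Sum>u\<in>V. tdist V E w u)" by linarith
  show ?thesis using D_step[OF f] far_pair[OF f] le by linarith
qed

lemma far_le:
  assumes cen: "is_centroid V E r" and e: "e \<in> E"
  shows "2 * card (far e r) \<le> card V"
proof (cases "far e r = {}")
  case True then show ?thesis by simp
next
  case False
  then obtain b where b: "b \<in> far e r" by blast
  then have bV: "b \<in> V" and nrb: "\<not> (adj (E - {e}))\<^sup>*\<^sup>* r b" by (auto simp: far_def)
  have rV: "r \<in> V" using cen by (simp add: is_centroid_def)
  obtain ps where "rtrancl_path (adj E) r ps b" using conn[OF rV bV] by (auto simp: rtranclp_eq_rtrancl_path)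
  then obtain qs where qs: "rtrancl_path (adj E) r qs b" and d: "distinct (r # qs)"
    using rtrancl_path_distinct by metis
  have "qs \<noteq> []"
  proof
    assume "qs = []"
    then have "r = b" using qs by (auto elim: rtrancl_path.cases)
    then show False using nrb by simp
  qed
  then obtain w ws where qw: "qs = w # ws" by (cases qs) auto
  have rw: "adj E r w" and wb: "rtrancl_path (adj E) w ws b" using qs qw by (auto elim: rtrancl_path.cases)
  let ?f = "{r, w}"
  have f: "?f \<in> E" using rw by (simp add: adj_def)
  have rn: "r \<notin> set (w # ws)" using d qw by simp
  have "?f \<notin> pedges w ws"
  proof
    assume "?f \<in> pedges w ws"
    then have "?f \<subseteq> set (w # ws)" by (rule pedges_sub)
    then show False using rn by simp
  qed
  then have "rtrancl_path (adj (E - {?f})) w ws b" using path_avoid[OF wb] by simp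
  then have wbf: "(adj (E - {?f}))\<^sup>*\<^sup>* w b" by (auto simp: rtranclp_eq_rtrancl_path)
  obtain p q where pq: "e = {p, q}" and pV: "p \<in> V" and qV: "q \<in> V" using edgeE[OF e] by blast
  have e': "{q, p} \<in> E" using e pq by (simp add: insert_commute)
  have sp: "far e p = {x. (adj (E - {e}))\<^sup>*\<^sup>* q x}" unfolding far_def pq by (rule side_split[OF e[unfolded pq]])
  have sq: "far e q = {x. (adj (E - {e}))\<^sup>*\<^sup>* p x}" unfolding far_def pq
    using side_split[OF e'] by (simp add: insert_commute)
  have "(adj (E - {e}))\<^sup>*\<^sup>* p r \<or> (adj (E - {e}))\<^sup>*\<^sup>* q r" using cover[OF conn[OF pV rV], of q] pq by simp
  then obtain c where c: "far e r = {x. (adj (E - {e}))\<^sup>*\<^sup>* c x}"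
  proof
    assume "(adj (E - {e}))\<^sup>*\<^sup>* p r"
    then have "far e r = far e p" using far_con con_sym by metis
    then show ?thesis using sp that by simp
  next
    assume "(adj (E - {e}))\<^sup>*\<^sup>* q r"
    then have "far e r = far e q" using far_con con_sym by metis
    then show ?thesis using sq that by simp
  qed
  have sub: "far e r \<subseteq> far ?f r"
  proof
    fix x assume x: "x \<in> far e r"
    then have xV: "x \<in> V" by (simp add: far_def)
    have cx: "(adj (E - {e}))\<^sup>*\<^sup>* c x" and cb: "(adj (E - {e}))\<^sup>*\<^sup>* c b" using x b c by auto
    have "(adj (E - {e}))\<^sup>*\<^sup>* x b" using con_sym[OF cx] cb by (rule rtranclp_trans)
    then obtain ys where ys: "rtrancl_path (adj (E - {e})) x ys b" by (auto simp: rtranclp_eq_rtrancl_path)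
    show "x \<in> far ?f r"
    proof (cases "?f \<in> pedges x ys")
      case True
      then have "?f \<subseteq> set (x # ys)" by (rule pedges_sub)
      then have "r \<in> set (x # ys)" by simp
      then have "(adj (E - {e}))\<^sup>*\<^sup>* r b" using path_suffix[OF ys] by simp
      then show ?thesis using nrb by simp
    next
      case False
      then have "rtrancl_path (adj (E - {e} - {?f})) x ys b" using path_avoid[OF ys] by simp
      then have "rtrancl_path (adj (E - {?f})) x ys b" by (rule rtrancl_path_mono) (auto simp: adj_def)
      then have xb: "(adj (E - {?f}))\<^sup>*\<^sup>* x b" by (auto simp: rtranclp_eq_rtrancl_path)
      have "\<not> (adj (E - {?f}))\<^sup>*\<^sup>* r x"
      proof
        assume "(adj (E - {?f}))\<^sup>*\<^sup>* r x"
        then have "(adj (E - {?f}))\<^sup>*\<^sup>* r b" using xb by (rule rtranclp_trans)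
        then have "(adj (E - {?f}))\<^sup>*\<^sup>* r w" using con_sym[OF wbf] by (rule rtranclp_trans)
        then show False using bridge[OF f] by simp
      qed
      then show ?thesis using xV by (simp add: far_def)
    qed
  qed
  have "finite (far ?f r)" using finV by (simp add: far_def)
  then have "card (far e r) \<le> card (far ?f r)" using sub by (rule card_mono)
  then show ?thesis using far_incident_le[OF cen f] by linarith
qed

lemma cut_far:
  assumes cen: "is_centroid V E r" and e: "e \<in> E"
  shows "cut_number V E e = card (far e r)"
proof -
  have rV: "r \<in> V" using cen by (simp add: is_centroid_def)
  obtain p q where pq: "e = {p, q}" and pV: "p \<in> V" and qV: "q \<in> V" using edgeE[OF e] by blast
  have e': "{q, p} \<in> E" using e pq by (simp add: insert_commute)
  have sp: "far e p = {x. (adj (E - {e}))\<^sup>*\<^sup>* q x}" unfolding far_def pq by (rule side_split[OF e[unfolded pq]])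
  have sq: "far e q = {x. (adj (E - {e}))\<^sup>*\<^sup>* p x}" unfolding far_def pq
    using side_split[OF e'] by (simp add: insert_commute)
  have rp: "reach V (E - {e}) p = far e q" using reach_eq[of "E - {e}" p] pV sq by auto
  have rq: "reach V (E - {e}) q = far e p" using reach_eq[of "E - {e}" q] qV sp by auto
  have cut: "cut_number V E e = min (card (far e q)) (card (far e p))"
    unfolding cut_number_def pq using rp rq pq by simp
  have sum: "card (far e p) + card (far e q) = card V" using far_pair[OF e[unfolded pq]] pq by simp
  have le: "2 * card (far e r) \<le> card V" by (rule far_le[OF cen e])
  have "(adj (E - {e}))\<^sup>*\<^sup>* p r \<or> (adj (E - {e}))\<^sup>*\<^sup>* q r" using cover[OF conn[OF pV rV], of q] pq by simp
  then show ?thesis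
  proof
    assume "(adj (E - {e}))\<^sup>*\<^sup>* p r"
    then have "far e r = far e p" using far_con con_sym by metis
    then show ?thesis using cut sum le by simp
  next
    assume "(adj (E - {e}))\<^sup>*\<^sup>* q r"
    then have "far e r = far e q" using far_con con_sym by metis
    then show ?thesis using cut sum le by simp
  qed
qed

lemma main:
  assumes cen: "is_centroid V E r"
  shows "S_c V E = S_d V E r"
proof -
  have rV: "r \<in> V" using cen by (simp add: is_centroid_def)
  have "S_c V E = (\<Sum>e\<in>E. card (far e r))" unfolding S_c_def using cut_far[OF cen] by simp
  also have "\<dots> = S_d V E r" unfolding S_d_def using D_formula[OF rV] by simp
  finally show ?thesis .
qed

end

theorem lemma5p13:
  fixes V :: "'a set" and E :: "'a set set" and r :: 'a
  assumes "is_tree V E"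
    and "r \<in> V"
    and "is_centroid V E r"
  shows "S_c V E = S_d V E r"
  using main[OF assms(1) assms(3)] .

end
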